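(* There exists an absolute constant $C>0$ such that for any integers $m\ge2$ and $M\ge m$, $$\sum_{0\le j_1<j_2<\dots<j_m<M}\ \prod_{k=1}^{m-1}\frac{j_{k+1}-j_k}{j_k+1}\le \log(M+1)\left(\frac{CM}{m^2}\right)^m,$$ where the sum is over all integer vectors $(j_1,\dots,j_m)$ with $0\le j_1<\dots<j_m<M$. *)

theory Defs
  imports "HOL-Analysis.Analysis"
begin

text \<open>Integer vectors (j_1,...,j_m) with 0 \<le> j_1 < ... < j_m < M, represented as
  functions nat \<Rightarrow> nat on the index set {1..m}, extended by 0 outside {1..m}
  (so that each vector is represented exactly once).\<close>
definition incr_vecs :: "nat \<Rightarrow> nat \<Rightarrow> (nat \<Rightarrow> nat) set" where
  "incr_vecs m M = {j. (\<forall>k. k \<notin> {1..m} \<longrightarrow> j k = 0)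
                     \<and> (\<forall>k\<in>{1..<m}. j k < j (Suc k))
                     \<and> (\<forall>k\<in>{1..m}. j k < M)}"

end

theory Submission
  imports Defs
begin


lemma bern: "(x::real) \<ge> 0 \<Longrightarrow> x^(n+1) + real (n+1) * x^n \<le> (x+1)^(n+1)"
proof (induction n)
  case 0 then show ?case by simp
next
  case (Suc n)
  have "(x+1)^(Suc n+1) = (x+1)*(x+1)^(n+1)" by simp
  also have "\<dots> \<ge> (x+1)*(x^(n+1) + real (n+1) * x^n)"
    by (rule mult_left_mono) (use Suc in auto)
  finally have h: "(x+1)^(Suc n+1) \<ge> (x+1)*(x^(n+1) + real (n+1) * x^n)" .
  have "(x+1)*(x^(n+1) + real (n+1) * x^n) = x^(Suc n+1) + real (Suc n + 1) * x^(Suc n) + real (n+1) * x^n"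
    by (simp add: algebra_simps)
  moreover have "x^n \<ge> 0" using Suc by simp
  ultimately show ?case using h by (smt (verit) of_nat_0_le_iff mult_nonneg_nonneg)
qed

lemma fraceq: "(a::real) > 0 \<Longrightarrow> b > 0 \<Longrightarrow> X/(a*b) + Y/a = (X + b*Y)/(a*b)"
  by (simp add: field_simps)

lemma powsum: "(a::real) \<ge> 0 \<Longrightarrow> (\<Sum>y\<le>z. (real y + a)^s) \<le> (real z + a + 1)^(s+1) / real (s+1)"
proof (induction z)
  case 0
  have "a^(s+1) + real (s+1) * a^s \<le> (a+1)^(s+1)" using bern[OF 0] .
  moreover have "a^(s+1) \<ge> 0" using 0 by simp
  ultimately show ?case by (simp add: field_simps)
next
  case (Suc z)
  define W where "W = real z + a + 1"
  have W: "W \<ge> 0" using Suc.prems W_def by simp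
  have "(\<Sum>y\<le>Suc z. (real y + a)^s) = (\<Sum>y\<le>z. (real y + a)^s) + W^s"
    by (simp add: W_def add.commute add.left_commute)
  also have "\<dots> \<le> W^(s+1) / real (s+1) + W^s" using Suc W_def by simp
  also have "\<dots> = (W^(s+1) + real (s+1) * W^s)/real (s+1)" by (simp add: field_simps)
  also have "\<dots> \<le> (W+1)^(s+1)/real (s+1)"
    using bern[OF W, of s] by (intro divide_right_mono) auto
  finally show ?case by (simp add: W_def add.commute add.left_commute)
qed

lemma wsum: "(a::real) \<ge> 0 \<Longrightarrow> (\<Sum>y<z. (real y + a)^s * (real z - real y)) \<le> (real z + a + 1)^(s+2) / (real (s+1) * real (s+2))"
proof (induction z)
  case 0 then show ?case by simp
next
  case (Suc z)
  define W where "W = real z + a + 1"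
  have W: "W \<ge> 0" using Suc.prems W_def by simp
  have "(\<Sum>y<Suc z. (real y + a)^s * (real (Suc z) - real y)) =
      (\<Sum>y<Suc z. (real y + a)^s * (real z - real y)) + (\<Sum>y<Suc z. (real y + a)^s)"
    by (simp add: sum.distrib[symmetric] algebra_simps)
  also have "(\<Sum>y<Suc z. (real y + a)^s * (real z - real y)) = (\<Sum>y<z. (real y + a)^s * (real z - real y))"
    by simp
  also have "(\<Sum>y<Suc z. (real y + a)^s) = (\<Sum>y\<le>z. (real y + a)^s)"
    using lessThan_Suc_atMost by simp
  finally have "(\<Sum>y<Suc z. (real y + a)^s * (real (Suc z) - real y)) \<le>
     W^(s+2) / (real (s+1) * real (s+2)) + W^(s+1)/real (s+1)"
    using Suc powsum[OF Suc.prems, where z=z and s=s] W_def by simp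
  also have "\<dots> = (W^(s+2) + real (s+2) * W^(s+1)) / (real (s+1) * real (s+2))"
    by (rule fraceq) auto
  also have "\<dots> \<le> (W+1)^(s+2) / (real (s+1) * real (s+2))"
    using bern[OF W, of "s+1"] by (intro divide_right_mono) (auto simp: add.commute)
  finally show ?case by (simp add: W_def add.commute add.left_commute)
qed

lemma pow3: assumes "(x::real) > 0" "real n \<le> x" shows "(x+1)^n \<le> 3 * x^n"
proof -
  have "(x+1)^n = x^n * (1 + 1/x)^n" using assms by (simp add: field_simps power_mult_distrib[symmetric])
  also have "(1 + 1/x)^n \<le> exp (1/x) ^ n"
    by (rule power_mono) (use assms in auto)
  also have "exp (1/x) ^ n = exp (real n / x)" by (simp add: exp_of_nat_mult[symmetric])
  also have "\<dots> \<le> exp 1" using assms by simp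
  also have "\<dots> \<le> 3" by (rule exp_le)
  finally show ?thesis using assms by (simp add: mult_left_mono mult.commute)
qed

lemma harm: "(\<Sum>x<y. 1 / (real x + 1)) \<le> 2 * ln (real y + 1)"
proof (induction y)
  case 0 then show ?case by simp
next
  case (Suc y)
  have "ln ((real y + 1)/(real y + 2)) \<le> (real y + 1)/(real y + 2) - 1"
    by (rule ln_le_minus_one) simp
  hence "ln (real y + 1) - ln (real y + 2) \<le> - 1/(real y + 2)"
    by (simp add: ln_div field_simps)
  moreover have "1/(real y + 1) \<le> 2/(real y + 2)" by (simp add: field_simps)
  ultimately show ?case using Suc by (simp add: add.commute add.left_commute)
qed



fun Tf :: "nat \<Rightarrow> nat \<Rightarrow> real" where
  "Tf 0 y = 0"
| "Tf (Suc 0) y = 1"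
| "Tf (Suc (Suc r)) z = (\<Sum>y<z. Tf (Suc r) y * (real z - real y) / (real y + 1))"

lemma Tf_zero: "y + 1 < Suc r \<Longrightarrow> Tf (Suc r) y = 0"
proof (induction r arbitrary: y)
  case 0 then show ?case by simp
next
  case (Suc r)
  have "\<And>x. x < y \<Longrightarrow> Tf (Suc r) x = 0" using Suc by auto
  then show ?case by simp
qed

lemma Tf_nonneg: "Tf r y \<ge> 0"
  by (induction r y rule: Tf.induct) (auto intro!: sum_nonneg divide_nonneg_nonneg mult_nonneg_nonneg)

lemma e5: "(x::real)^(2 * s + 5) = x^(2 * s + 4) * x"
proof -
  have "2 * s + 5 = Suc (2 * s + 4)" by simp
  then show ?thesis by (simp only: power_Suc2)
qed

lemma fracle: "(b::real) > 0 \<Longrightarrow> d > 0 \<Longrightarrow> a*d \<le> c*b \<Longrightarrow> a/b \<le> c/d"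
  by (simp add: field_simps)

lemma keyineq: "3 * (real s+3)^(2 * s + 6) \<le> 200 * (real s+1) * (real s+2)^(2 * s + 5)"
proof -
  have p: "(real s + 3)^(s+2) \<le> 3 * (real s + 2)^(s+2)"
    using pow3[of "real s + 2" "s+2"] by (simp add: add.assoc)
  have e: "2 * s + 6 = (s+2)*2 + 2" by simp
  have "(real s+3)^(2 * s + 6) = ((real s + 3)^(s+2))^2 * (real s+3)^2"
    by (simp only: e power_add power_mult)
  also have "\<dots> \<le> (3 * (real s + 2)^(s+2))^2 * (real s+3)^2"
    by (intro mult_right_mono power_mono p) auto
  also have "\<dots> = 9 * (real s + 2)^(2 * s + 4) * (real s+3)^2"
  proof -
    have e2: "2 * s + 4 = (s+2)*2" by simp
    show ?thesis unfolding e2 power_mult power_mult_distrib by simp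
  qed
  finally have h: "(real s+3)^(2 * s + 6) \<le> 9 * (real s + 2)^(2 * s + 4) * (real s+3)^2" .
  have q: "27 * (real s+3)^2 \<le> 200 * (real s + 1) * (real s + 2)"
    by (simp add: power2_eq_square algebra_simps)
  have "(real s+2)^(2 * s + 5) = (real s + 2)^(2 * s + 4) * (real s + 2)" by (rule e5)
  hence "3 * (9 * (real s + 2)^(2 * s + 4) * (real s+3)^2) \<le> 200 * (real s+1) * (real s+2)^(2 * s + 5)"
  proof -
    assume eq: "(real s+2)^(2 * s + 5) = (real s + 2)^(2 * s + 4) * (real s + 2)"
    have P: "(real s + 2)^(2 * s + 4) \<ge> 0" by simp
    have "3 * (9 * (real s + 2)^(2 * s + 4) * (real s+3)^2) = (real s + 2)^(2 * s + 4) * (27 * (real s+3)^2)"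
      by simp
    also have "\<dots> \<le> (real s + 2)^(2 * s + 4) * (200 * (real s + 1) * (real s + 2))"
      by (rule mult_left_mono[OF q P])
    also have "\<dots> = 200 * (real s+1) * (real s+2)^(2 * s + 5)" unfolding eq by simp
    finally show ?thesis .
  qed
  then show ?thesis using h by linarith
qed

lemma Tf_base: assumes "y < M" shows "Tf 2 y \<le> 2 * ln (real M + 1) * (real y + 1)"
proof -
  have "Tf 2 y = (\<Sum>x<y. (real y - real x) / (real x + 1))" by (simp add: numeral_2_eq_2)
  also have "\<dots> \<le> (\<Sum>x<y. real y * (1 / (real x + 1)))"
    by (intro sum_mono) (simp add: divide_right_mono)
  also have "\<dots> = real y * (\<Sum>x<y. 1 / (real x + 1))" by (simp add: sum_distrib_left)
  also have "\<dots> \<le> real y * (2 * ln (real y + 1))" by (intro mult_left_mono harm) auto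
  also have "\<dots> \<le> (real y + 1) * (2 * ln (real M + 1))"
    using assms by (intro mult_mono) auto
  finally show ?thesis by (simp add: ac_simps)
qed

lemma Tf_bound: "y < M \<Longrightarrow> Tf (Suc (Suc s)) y \<le>
   2 * ln (real M + 1) * 200^(s+2) * (real y + 1)^(s+1) / (real s + 2)^(2 * s + 4)"
proof (induction s arbitrary: y)
  case 0
  have "Tf 2 y \<le> 2 * ln (real M + 1) * (real y + 1)" by (rule Tf_base[OF 0])
  moreover have "(real y + 1) * ln (real M + 1) \<ge> 0" by simp
  moreover have "2 * ln (real M + 1) * (real y + 1) = 2 * ((real y + 1) * ln (real M + 1))" by simp
  ultimately have "Tf 2 y \<le> 5000 * ((real y + 1) * ln (real M + 1))" by linarith
  then show ?case by (simp add: numeral_2_eq_2 [symmetric])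
next
  case (Suc s)
  define L where "L = 2 * ln (real M + 1)"
  have L0: "L \<ge> 0" by (simp add: L_def)
  define K where "K = L * 200^(s+2) / (real s + 2)^(2 * s + 4)"
  have K0: "K \<ge> 0" using L0 by (simp add: K_def)
  define z where "z = y"
  show ?case
  proof (cases "y < s + 2")
    case True
    hence "Tf (Suc (Suc (Suc s))) y = 0" by (intro Tf_zero) auto
    then show ?thesis using L0 by (simp add: L_def)
  next
    case False
    have "Tf (Suc (Suc (Suc s))) y = (\<Sum>x<y. Tf (Suc (Suc s)) x * (real y - real x) / (real x + 1))"
      by simp
    also have "\<dots> \<le> (\<Sum>x<y. K * ((real x + 1)^s * (real y - real x)))"
    proof (intro sum_mono)
      fix x assume x: "x \<in> {..<y}"
      have "Tf (Suc (Suc s)) x \<le> K * (real x + 1)^(s+1)"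
        using Suc.IH[of x] x Suc.prems by (simp add: K_def L_def)
      hence "Tf (Suc (Suc s)) x * (real y - real x) / (real x + 1) \<le> K * (real x + 1)^(s+1) * (real y - real x) / (real x + 1)"
        using x by (intro divide_right_mono mult_right_mono) auto
      also have "\<dots> = K * ((real x + 1)^s * (real y - real x))" by (simp add: field_simps)
      finally show "Tf (Suc (Suc s)) x * (real y - real x) / (real x + 1) \<le> K * ((real x + 1)^s * (real y - real x))" .
    qed
    also have "\<dots> = K * (\<Sum>x<y. (real x + 1)^s * (real y - real x))" by (simp add: sum_distrib_left)
    also have "\<dots> \<le> K * ((real y + 1 + 1)^(s+2) / (real (s+1) * real (s+2)))"
      by (intro mult_left_mono wsum K0) auto
    also have "\<dots> \<le> K * (3 * (real y + 1)^(s+2) / (real (s+1) * real (s+2)))"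
      using False by (intro mult_left_mono divide_right_mono pow3 K0) auto
    also have "\<dots> = (L * (real y + 1)^(s+2) * 200^(s+2)) * (3 / ((real s + 1) * (real s + 2)^(2 * s + 5)))"
      unfolding K_def e5 by (simp add: field_simps)
    also have "\<dots> \<le> (L * (real y + 1)^(s+2) * 200^(s+2)) * (200 / (real s + 3)^(2 * s + 6))"
    proof (intro mult_left_mono)
      show "3 / ((real s + 1) * (real s + 2)^(2 * s + 5)) \<le> 200 / (real s + 3)^(2 * s + 6)"
      proof (rule fracle)
        show "3 * (real s+3)^(2 * s + 6) \<le> 200 * ((real s + 1) * (real s+2)^(2 * s + 5))"
          using keyineq[of s] by (simp only: mult.assoc)
      qed auto
    qed (use L0 in auto)
    also have "\<dots> = L * 200^(Suc s+2) * (real y + 1)^(Suc s+1) / (real (Suc s) + 2)^(2 * Suc s + 4)"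
      by (simp add: field_simps)
    finally show ?thesis by (simp add: L_def)
  qed
qed



definition Av :: "nat \<Rightarrow> nat \<Rightarrow> (nat \<Rightarrow> nat) set" where
  "Av r y = {j. (\<forall>k. k \<notin> {1..r} \<longrightarrow> j k = 0) \<and> (\<forall>k\<in>{1..<r}. j k < j (Suc k)) \<and> j r = y}"

definition Pv :: "nat \<Rightarrow> (nat \<Rightarrow> nat) \<Rightarrow> real" where
  "Pv r j = (\<Prod>k\<in>{1..<r}. (real (j (Suc k)) - real (j k)) / (real (j k) + 1))"

lemma mono_aux: fixes j :: "nat \<Rightarrow> nat" assumes "\<forall>k\<in>{1..<r}. j k < j (Suc k)"
  shows "\<forall>k. 1 \<le> k \<longrightarrow> k + d \<le> r \<longrightarrow> j k \<le> j (k + d)"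
proof (induction d)
  case 0 then show ?case by simp
next
  case (Suc d)
  show ?case
  proof (intro allI impI)
    fix k assume k: "1 \<le> k" "k + Suc d \<le> r"
    then have "j k \<le> j (k + d)" using Suc by simp
    moreover have "k + d \<in> {1..<r}" using k by auto
    then have "j (k + d) < j (Suc (k + d))" using assms by blast
    ultimately show "j k \<le> j (k + Suc d)" by simp
  qed
qed

lemma mono_le: fixes j :: "nat \<Rightarrow> nat"
  assumes "\<forall>k\<in>{1..<r}. j k < j (Suc k)" "1 \<le> k" "k \<le> r" shows "j k \<le> j r"
proof -
  have "1 \<le> k \<longrightarrow> k + (r - k) \<le> r \<longrightarrow> j k \<le> j (k + (r - k))"
    using mono_aux[OF assms(1), of "r - k"] by (rule spec)
  then show ?thesis using assms(2,3) by simp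
qed

lemma Av_disj: "x \<noteq> x' \<Longrightarrow> Av r x \<inter> Av r x' = {}"
  by (auto simp: Av_def)

lemma Av_finite: "finite (Av r y)"
proof (rule finite_subset)
  show "Av r y \<subseteq> {f. \<forall>x. (x \<in> {1..r} \<longrightarrow> f x \<in> {..y}) \<and> (x \<notin> {1..r} \<longrightarrow> f x = 0)}"
  proof
    fix j assume j: "j \<in> Av r y"
    have A: "\<forall>k. k \<notin> {1..r} \<longrightarrow> j k = 0" "\<forall>k\<in>{1..<r}. j k < j (Suc k)" "j r = y"
      using j unfolding Av_def by auto
    have "\<forall>x. (x \<in> {1..r} \<longrightarrow> j x \<in> {..y}) \<and> (x \<notin> {1..r} \<longrightarrow> j x = 0)"
    proof (intro allI conjI impI)
      fix x assume "x \<in> {1..r}"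
      then have "j x \<le> j r" using mono_le[OF A(2)] by auto
      then show "j x \<in> {..y}" using A by simp
    qed (use A in auto)
    then show "j \<in> {f. \<forall>x. (x \<in> {1..r} \<longrightarrow> f x \<in> {..y}) \<and> (x \<notin> {1..r} \<longrightarrow> f x = 0)}" by blast
  qed
  show "finite {f. \<forall>x. (x \<in> {1..r} \<longrightarrow> f x \<in> {..y}) \<and> (x \<notin> {1..r} \<longrightarrow> f x = (0::nat))}"
    by (rule finite_set_of_finite_funs) auto
qed

lemma Av_step: assumes "1 \<le> r"
  shows "Av (Suc r) z = (\<lambda>j. j(Suc r := z)) ` (\<Union>y\<in>{..<z}. Av r y)"
proof
  show "Av (Suc r) z \<subseteq> (\<lambda>j. j(Suc r := z)) ` (\<Union>y\<in>{..<z}. Av r y)"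
  proof
    fix j assume j: "j \<in> Av (Suc r) z"
    let ?j0 = "j(Suc r := 0)"
    have "?j0 \<in> Av r (j r)" using j unfolding Av_def by auto
    moreover have "j r < z" using j assms unfolding Av_def by auto
    moreover have "j = ?j0(Suc r := z)" using j unfolding Av_def by auto
    ultimately show "j \<in> (\<lambda>j. j(Suc r := z)) ` (\<Union>y\<in>{..<z}. Av r y)" by blast
  qed
next
  show "(\<lambda>j. j(Suc r := z)) ` (\<Union>y\<in>{..<z}. Av r y) \<subseteq> Av (Suc r) z"
  proof
    fix j' assume "j' \<in> (\<lambda>j. j(Suc r := z)) ` (\<Union>y\<in>{..<z}. Av r y)"
    then obtain j y where jy: "y < z" "j \<in> Av r y" and j': "j' = j(Suc r := z)" by auto
    have A: "\<forall>k. k \<notin> {1..r} \<longrightarrow> j k = 0" "\<forall>k\<in>{1..<r}. j k < j (Suc k)" "j r = y"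
      using jy unfolding Av_def by auto
    have "\<forall>k. k \<notin> {1..Suc r} \<longrightarrow> j' k = 0" using A j' by auto
    moreover have "\<forall>k\<in>{1..<Suc r}. j' k < j' (Suc k)"
    proof
      fix k assume k: "k \<in> {1..<Suc r}"
      show "j' k < j' (Suc k)"
      proof (cases "k = r")
        case True then show ?thesis using A jy j' by auto
      next
        case False then show ?thesis using A k j' by auto
      qed
    qed
    moreover have "j' (Suc r) = z" using j' by simp
    ultimately show "j' \<in> Av (Suc r) z" unfolding Av_def by blast
  qed
qed

lemma Av_inj: "inj_on (\<lambda>j. j(Suc r := z)) (\<Union>y\<in>Y. Av r y)"
proof (rule inj_onI)
  fix a b assume a: "a \<in> (\<Union>y\<in>Y. Av r y)" and b: "b \<in> (\<Union>y\<in>Y. Av r y)"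
    and e: "a(Suc r := z) = b(Suc r := z)"
  have "a (Suc r) = 0" "b (Suc r) = 0" using a b unfolding Av_def by auto
  then show "a = b" using e unfolding fun_eq_iff by (metis fun_upd_apply)
qed

lemma Pv_step: assumes "1 \<le> r" "j \<in> Av r y"
  shows "Pv (Suc r) (j(Suc r := z)) = ((real z - real y) / (real y + 1)) * Pv r j"
proof -
  have jr: "j r = y" using assms unfolding Av_def by auto
  have "Pv (Suc r) (j(Suc r := z)) = (\<Prod>k\<in>insert r {1..<r}. (real ((j(Suc r := z)) (Suc k)) - real ((j(Suc r := z)) k)) / (real ((j(Suc r := z)) k) + 1))"
    unfolding Pv_def using assms(1) by (simp add: atLeastLessThanSuc)
  also have "\<dots> = ((real z - real y) / (real y + 1)) * (\<Prod>k\<in>{1..<r}. (real ((j(Suc r := z)) (Suc k)) - real ((j(Suc r := z)) k)) / (real ((j(Suc r := z)) k) + 1))"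
    using jr by (simp add: prod.insert)
  also have "(\<Prod>k\<in>{1..<r}. (real ((j(Suc r := z)) (Suc k)) - real ((j(Suc r := z)) k)) / (real ((j(Suc r := z)) k) + 1)) = Pv r j"
    unfolding Pv_def by (intro prod.cong) auto
  finally show ?thesis .
qed

lemma S_eq: "(\<Sum>j\<in>Av (Suc r) y. Pv (Suc r) j) = Tf (Suc r) y"
proof (induction r arbitrary: y)
  case 0
  have "Av (Suc 0) y = {(\<lambda>_. 0)(1 := y)}"
    unfolding Av_def by (auto simp: fun_eq_iff)
  then show ?case by (simp add: Pv_def)
next
  case (Suc r)
  have "(\<Sum>j\<in>Av (Suc (Suc r)) y. Pv (Suc (Suc r)) j) =
     (\<Sum>j\<in>(\<Union>x\<in>{..<y}. Av (Suc r) x). Pv (Suc (Suc r)) (j(Suc (Suc r) := y)))"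
    unfolding Av_step[of "Suc r" y, simplified] by (rule sum.reindex[OF Av_inj, unfolded comp_def])
  also have "\<dots> = (\<Sum>x<y. (\<Sum>j\<in>Av (Suc r) x. Pv (Suc (Suc r)) (j(Suc (Suc r) := y))))"
    by (rule sum.UNION_disjoint) (auto simp: Av_finite Av_disj)
  also have "\<dots> = (\<Sum>x<y. (\<Sum>j\<in>Av (Suc r) x. ((real y - real x) / (real x + 1)) * Pv (Suc r) j))"
    by (intro sum.cong refl Pv_step) auto
  also have "\<dots> = (\<Sum>x<y. ((real y - real x) / (real x + 1)) * Tf (Suc r) x)"
    by (intro sum.cong refl) (simp only: sum_distrib_left[symmetric] Suc.IH)
  finally show ?case by (simp add: mult.commute)
qed

lemma incr_eq: assumes "1 \<le> m" shows "incr_vecs m M = (\<Union>y\<in>{..<M}. Av m y)"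
proof
  show "incr_vecs m M \<subseteq> (\<Union>y\<in>{..<M}. Av m y)"
  proof
    fix j assume j: "j \<in> incr_vecs m M"
    then have "j \<in> Av m (j m)" unfolding incr_vecs_def Av_def by auto
    moreover have "j m < M" using j assms unfolding incr_vecs_def by auto
    ultimately show "j \<in> (\<Union>y\<in>{..<M}. Av m y)" by blast
  qed
next
  show "(\<Union>y\<in>{..<M}. Av m y) \<subseteq> incr_vecs m M"
  proof
    fix j assume "j \<in> (\<Union>y\<in>{..<M}. Av m y)"
    then obtain y where y: "y < M" "j \<in> Av m y" by auto
    have A: "\<forall>k. k \<notin> {1..m} \<longrightarrow> j k = 0" "\<forall>k\<in>{1..<m}. j k < j (Suc k)" "j m = y"
      using y unfolding Av_def by auto
    have "\<forall>k\<in>{1..m}. j k < M"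
    proof
      fix k assume "k \<in> {1..m}"
      then have "j k \<le> j m" using mono_le[OF A(2)] by auto
      then show "j k < M" using A y by simp
    qed
    then show "j \<in> incr_vecs m M" using A unfolding incr_vecs_def by blast
  qed
qed


theorem corollary6p3:
  shows "\<exists>C::real. C > 0 \<and>
    (\<forall>m M :: nat. 2 \<le> m \<longrightarrow> m \<le> M \<longrightarrow>
      (\<Sum>j\<in>incr_vecs m M. \<Prod>k\<in>{1..<m}.
          (real (j (Suc k)) - real (j k)) / (real (j k) + 1))
      \<le> ln (real M + 1) * (C * real M / (real m)^2) ^ m)"
proof (intro exI[of _ 400] conjI allI impI)
  show "(400::real) > 0" by simp
  fix m M :: nat assume m: "2 \<le> m" and mM: "m \<le> M"
  define s where "s = m - 2"
  have ms: "m = Suc (Suc s)" using m s_def by simp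
  define B where "B = 2 * ln (real M + 1) * 200^(s+2) / (real s + 2)^(2 * s + 4)"
  have B0: "B \<ge> 0" by (simp add: B_def)
  have "(\<Sum>j\<in>incr_vecs m M. \<Prod>k\<in>{1..<m}.
          (real (j (Suc k)) - real (j k)) / (real (j k) + 1)) = (\<Sum>j\<in>incr_vecs m M. Pv m j)"
    by (simp add: Pv_def)
  also have "\<dots> = (\<Sum>j\<in>(\<Union>y\<in>{..<M}. Av m y). Pv m j)"
    using incr_eq[of m M] m by simp
  also have "\<dots> = (\<Sum>y<M. \<Sum>j\<in>Av m y. Pv m j)"
    by (rule sum.UNION_disjoint) (auto simp: Av_finite Av_disj)
  also have "\<dots> = (\<Sum>y<M. Tf m y)"
    unfolding ms by (intro sum.cong refl S_eq)
  also have "\<dots> \<le> (\<Sum>y<M. B * (real M)^(s+1))"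
  proof (intro sum_mono)
    fix y assume y: "y \<in> {..<M}"
    have "Tf m y \<le> B * (real y + 1)^(s+1)"
      using Tf_bound[of y M s] y unfolding ms B_def by simp
    also have "\<dots> \<le> B * (real M)^(s+1)"
      using y B0 by (intro mult_left_mono power_mono) auto
    finally show "Tf m y \<le> B * (real M)^(s+1)" .
  qed
  also have "\<dots> = (2 * 200^(s+2)) * (ln (real M + 1) * (real M)^(s+2) / (real s + 2)^(2 * s + 4))"
    by (simp add: B_def)
  also have "\<dots> \<le> 400^(s+2) * (ln (real M + 1) * (real M)^(s+2) / (real s + 2)^(2 * s + 4))"
  proof (rule mult_right_mono)
    have "(2::real) \<le> 2^(s+2)" using power_increasing[of 1 "s+2" "2::real"] by simp
    then have "(2::real) * 200^(s+2) \<le> 2^(s+2) * 200^(s+2)" by (intro mult_right_mono) auto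
    also have "\<dots> = 400^(s+2)" by (simp add: power_mult_distrib[symmetric])
    finally show "(2::real) * 200^(s+2) \<le> 400^(s+2)" .
  qed simp
  also have "\<dots> = ln (real M + 1) * (400 * real M / (real m)^2) ^ m"
  proof -
    have e1: "2 * m = 2 * s + 4" "real m = real s + 2" using ms by auto
    have "(real m ^ 2) ^ m = real m ^ (2 * m)" by (simp add: power_mult)
    also have "\<dots> = (real s + 2)^(2 * s + 4)" by (simp only: e1)
    finally have e: "(real m ^ 2) ^ m = (real s + 2)^(2 * s + 4)" .
    show ?thesis unfolding power_divide e power_mult_distrib
      by (simp add: ms)
  qed
  finally show "(\<Sum>j\<in>incr_vecs m M. \<Prod>k\<in>{1..<m}.
          (real (j (Suc k)) - real (j k)) / (real (j k) + 1))
      \<le> ln (real M + 1) * (400 * real M / (real m)^2) ^ m" .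
qed

end
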